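(* Let $T=(V,E,w)$ be a tree with positive integer costs. For every decision tree $D$ for $T$ there is an extended strategy function $f$ for $T$ with $\sup\bigcup_{v\in V}f(v)=\mathrm{COST}(D)$, and for every extended strategy function $f$ for $T$ there is a decision tree $D$ for $T$ with $\mathrm{COST}(D)\le \sup\bigcup_{v\in V} f(v)$. Consequently $\mathrm{OPT}(T)=\min_f \sup\bigcup_{v\in V}f(v)$, the minimum over all extended strategy functions $f$ for $T$.
   Context: A decision tree for $T$ is defined recursively: if $|V|=1$ it consists of that single vertex; otherwise one chooses a vertex $q$, and the decision tree is the rooted tree with root $q$ whose children are the roots of decision trees for the connected components of $T-q$. $\mathrm{COST}(D)$ is the maximum over root-to-leaf paths $P$ of $D$ of $\sum_{v\in P}w(v)$, and $\mathrm{OPT}(T)$ is its minimum over decision trees. Intervals are of the form $[a,b)$ with integers $0\le a<b$, and $|[a,b)|=b-a$. For intervals $I=[a,b)$, $I'=[a',b')$ write $I>I'$ (equivalently $I'<I$) iff $a\ge b'$. An extended strategy function for $T$ is a map $f$ assigning to each vertex $v$ an interval $f(v)$ with $|f(v)|\ge w(v)$, such that for any distinct $v_1,v_2$ with $f(v_1)\cap f(v_2)\ne\emptyset$, the path between $v_1$ and $v_2$ contains a vertex $v_3$ with $f(v_3)>f(v_1)$ and $f(v_3)>f(v_2)$. *)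

theory Defs
  imports Main
begin

definition is_path :: "('a \<Rightarrow> 'a \<Rightarrow> bool) \<Rightarrow> 'a \<Rightarrow> 'a \<Rightarrow> 'a list \<Rightarrow> bool" where
  "is_path E u v p \<longleftrightarrow> p \<noteq> [] \<and> hd p = u \<and> last p = v \<and> distinct p \<and>
     (\<forall>i. Suc i < length p \<longrightarrow> E (p ! i) (p ! Suc i))"

definition is_tree :: "'a set \<Rightarrow> ('a \<Rightarrow> 'a \<Rightarrow> bool) \<Rightarrow> bool" where
  "is_tree V E \<longleftrightarrow> finite V \<and> V \<noteq> {} \<and>
     (\<forall>a b. E a b \<longrightarrow> a \<in> V \<and> b \<in> V) \<and>
     (\<forall>a b. E a b \<longrightarrow> E b a) \<and> (\<forall>a. \<not> E a a) \<and>
     (\<forall>u\<in>V. \<forall>v\<in>V. \<exists>!p. is_path E u v p)"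

definition comps :: "('a \<Rightarrow> 'a \<Rightarrow> bool) \<Rightarrow> 'a set \<Rightarrow> 'a set set" where
  "comps E U = {C. \<exists>x\<in>U. C = {y\<in>U. (\<lambda>a b. E a b \<and> a \<in> U \<and> b \<in> U)\<^sup>*\<^sup>* x y}}"

datatype 'a dtree = DNode 'a "'a dtree list"

fun dverts :: "'a dtree \<Rightarrow> 'a set" where
  "dverts (DNode q Ds) = insert q (\<Union>D\<in>set Ds. dverts D)"

inductive is_dtree :: "('a \<Rightarrow> 'a \<Rightarrow> bool) \<Rightarrow> 'a set \<Rightarrow> 'a dtree \<Rightarrow> bool" for E where
  "q \<in> U \<Longrightarrow> (\<forall>D\<in>set Ds. is_dtree E (dverts D) D) \<Longrightarrow> distinct (map dverts Ds) \<Longrightarrow>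
   dverts ` set Ds = comps E (U - {q}) \<Longrightarrow> is_dtree E U (DNode q Ds)"

fun dcost :: "('a \<Rightarrow> nat) \<Rightarrow> 'a dtree \<Rightarrow> nat" where
  "dcost w (DNode q Ds) = w q + foldr max (map (dcost w) Ds) 0"

definition OPT :: "'a set \<Rightarrow> ('a \<Rightarrow> 'a \<Rightarrow> bool) \<Rightarrow> ('a \<Rightarrow> nat) \<Rightarrow> nat" where
  "OPT V E w = (LEAST c. \<exists>D. is_dtree E V D \<and> dcost w D = c)"

text \<open>Intervals [a,b) with 0 \<le> a < b are represented as pairs (a,b) of naturals.\<close>

definition ilen :: "nat \<times> nat \<Rightarrow> nat" where
  "ilen I = snd I - fst I"

definition igt :: "nat \<times> nat \<Rightarrow> nat \<times> nat \<Rightarrow> bool" where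
  "igt I I' \<longleftrightarrow> fst I \<ge> snd I'"

definition iinter :: "nat \<times> nat \<Rightarrow> nat \<times> nat \<Rightarrow> bool" where
  "iinter I I' \<longleftrightarrow> max (fst I) (fst I') < min (snd I) (snd I')"

definition ext_strategy :: "'a set \<Rightarrow> ('a \<Rightarrow> 'a \<Rightarrow> bool) \<Rightarrow> ('a \<Rightarrow> nat) \<Rightarrow> ('a \<Rightarrow> nat \<times> nat) \<Rightarrow> bool" where
  "ext_strategy V E w f \<longleftrightarrow>
     (\<forall>v\<in>V. fst (f v) < snd (f v) \<and> ilen (f v) \<ge> w v) \<and>
     (\<forall>v1\<in>V. \<forall>v2\<in>V. v1 \<noteq> v2 \<and> iinter (f v1) (f v2) \<longrightarrow>
        (\<exists>p. is_path E v1 v2 p \<and> (\<exists>v3\<in>set p. igt (f v3) (f v1) \<and> igt (f v3) (f v2))))"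

definition sup_union :: "'a set \<Rightarrow> ('a \<Rightarrow> nat \<times> nat) \<Rightarrow> nat" where
  "sup_union V f = Max ((\<lambda>v. snd (f v)) ` V)"

end

theory Submission
  imports Defs
begin

definition ind :: "('a \<Rightarrow> 'a \<Rightarrow> bool) \<Rightarrow> 'a set \<Rightarrow> 'a \<Rightarrow> 'a \<Rightarrow> bool" where
  "ind E S = (\<lambda>a b. E a b \<and> a \<in> S \<and> b \<in> S)"

lemma comps_def': "comps E S = {C. \<exists>x\<in>S. C = {y\<in>S. (ind E S)\<^sup>*\<^sup>* x y}}"
  unfolding comps_def ind_def by simp

lemma comps_sub: "C \<in> comps E S \<Longrightarrow> C \<subseteq> S"
  unfolding comps_def' by auto

lemma comps_union: "\<Union>(comps E S) = S"
  unfolding comps_def' by auto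

lemma comps_ne: "C \<in> comps E S \<Longrightarrow> C \<noteq> {}"
  unfolding comps_def' by auto

lemma ind_symp: "(\<forall>a b. E a b \<longrightarrow> E b a) \<Longrightarrow> symp (ind E S)"
  unfolding ind_def symp_def by auto

lemma comps_eq:
  assumes sym: "\<forall>a b. E a b \<longrightarrow> E b a" and C: "C \<in> comps E S" and z: "z \<in> C"
  shows "C = {y\<in>S. (ind E S)\<^sup>*\<^sup>* z y}"
proof -
  obtain x where x: "x \<in> S" "C = {y\<in>S. (ind E S)\<^sup>*\<^sup>* x y}" using C unfolding comps_def' by auto
  have xz: "(ind E S)\<^sup>*\<^sup>* x z" "z \<in> S" using z x by auto
  have zx: "(ind E S)\<^sup>*\<^sup>* z x" using sympD[OF symp_rtranclp[OF ind_symp[OF sym]] xz(1)] .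
  show ?thesis using x xz zx by (auto intro: rtranclp_trans)
qed

lemma comps_disj:
  assumes sym: "\<forall>a b. E a b \<longrightarrow> E b a" and "C1 \<in> comps E S" "C2 \<in> comps E S" "z \<in> C1" "z \<in> C2"
  shows "C1 = C2"
  using comps_eq[OF sym assms(2,4)] comps_eq[OF sym assms(3,5)] by simp

lemma path_nth_in:
  assumes "is_path E u v p" "i < length p" "i > 0"
  shows "(ind E S)\<^sup>*\<^sup>* (p!0) (p!i) \<or> (\<exists>j<i. p!j \<notin> S) \<or> p!i \<notin> S"
  using assms
proof (induction i)
  case 0 then show ?case by simp
next
  case (Suc i)
  show ?case
  proof (cases i)
    case 0
    then show ?thesis using Suc.prems unfolding is_path_def ind_def by auto
  next
    case (Suc k)
    then have IH: "(ind E S)\<^sup>*\<^sup>* (p!0) (p!i) \<or> (\<exists>j<i. p!j \<notin> S) \<or> p!i \<notin> S"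
      using Suc.IH Suc.prems by auto
    have e: "E (p!i) (p!Suc i)" using Suc.prems unfolding is_path_def by auto
    show ?thesis
    proof (cases "p!i \<in> S \<and> p!Suc i \<in> S")
      case True
      then show ?thesis using IH e
        by (metis ind_def less_Suc_eq rtranclp.rtrancl_into_rtrancl)
    next
      case False
      then show ?thesis using less_Suc_eq by auto
    qed
  qed
qed

lemma path_in_comp:
  assumes sym: "\<forall>a b. E a b \<longrightarrow> E b a" and p: "is_path E u v p" and sub: "set p \<subseteq> S"
    and C: "C \<in> comps E S" and u: "u \<in> C"
  shows "set p \<subseteq> C"
proof
  fix x assume "x \<in> set p"
  then obtain i where i: "i < length p" "p!i = x" by (auto simp: in_set_conv_nth)
  have p0: "p!0 = u" using p unfolding is_path_def by (metis hd_conv_nth)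
  have xS: "x \<in> S" using sub \<open>x \<in> set p\<close> by auto
  have "(ind E S)\<^sup>*\<^sup>* u x"
  proof (cases "i = 0")
    case True then show ?thesis using i p0 by simp
  next
    case False
    have "\<forall>j<length p. p!j \<in> S" using sub by auto
    then show ?thesis using path_nth_in[OF p i(1), of S] False i p0 by auto
  qed
  then show "x \<in> C" using comps_eq[OF sym C u] xS by auto
qed

lemma walk_path:
  assumes "(ind E S)\<^sup>*\<^sup>* x y" "x \<in> S"
  shows "\<exists>p. is_path E x y p \<and> set p \<subseteq> S"
  using assms(1)
proof (induction rule: rtranclp_induct)
  case base
  then show ?case using assms(2) by (intro exI[of _ "[x]"]) (auto simp: is_path_def)
next
  case (step y z)
  obtain p where p: "is_path E x y p" "set p \<subseteq> S" using step.IH by auto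
  have yz: "E y z" "z \<in> S" using step.hyps(2) unfolding ind_def by auto
  show ?case
  proof (cases "z \<in> set p")
    case True
    then obtain i where i: "i < length p" "p!i = z" by (auto simp: in_set_conv_nth)
    let ?q = "take (Suc i) p"
    have lt: "last ?q = z"
    proof -
      have "?q \<noteq> []" using i by (cases p) auto
      then have "last ?q = ?q ! (length ?q - 1)" by (rule last_conv_nth)
      also have "\<dots> = p ! i" using i by (auto simp add: min_def intro: arg_cong[where f="(!) p"])
      finally show ?thesis using i by simp
    qed
    have "is_path E x z ?q"
      using p(1) i lt unfolding is_path_def
      by (auto simp: hd_take)
    moreover have "set ?q \<subseteq> S" using p(2) set_take_subset by fastforce
    ultimately show ?thesis by blast
  next
    case False
    have "is_path E x z (p @ [z])"
      unfolding is_path_def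
    proof (intro conjI allI impI)
      show "hd (p @ [z]) = x" using p(1) unfolding is_path_def by simp
      show "distinct (p @ [z])" using p(1) False unfolding is_path_def by simp
      fix i assume "Suc i < length (p @ [z])"
      then have "Suc i < length p \<or> Suc i = length p" by auto
      then show "E ((p @ [z]) ! i) ((p @ [z]) ! Suc i)"
      proof
        assume "Suc i < length p" then show ?thesis using p(1) unfolding is_path_def by (simp add: nth_append)
      next
        assume a: "Suc i = length p"
        then have "p ! i = last p" using last_conv_nth[of p] by (metis diff_Suc_1 list.size(3) nat.distinct(1))
        then show ?thesis using a yz p(1) unfolding is_path_def by (simp add: nth_append)
      qed
    qed auto
    then show ?thesis using p(2) yz by (intro exI[of _ "p @ [z]"]) auto
  qed
qed

definition conv :: "('a \<Rightarrow> 'a \<Rightarrow> bool) \<Rightarrow> 'a set \<Rightarrow> bool" where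
  "conv E U \<longleftrightarrow> (\<forall>u\<in>U. \<forall>v\<in>U. \<forall>p. is_path E u v p \<longrightarrow> set p \<subseteq> U)"

lemma conv_V: assumes "is_tree V E" shows "conv E V"
  unfolding conv_def
proof (intro ballI allI impI subsetI)
  fix u v p x assume uv: "u \<in> V" "v \<in> V" and p: "is_path E u v p" and x: "x \<in> set p"
  then obtain i where i: "i < length p" "p!i = x" by (auto simp: in_set_conv_nth)
  show "x \<in> V"
  proof (cases "Suc i < length p")
    case True
    then have "E (p!i) (p!Suc i)" using p unfolding is_path_def by auto
    then show ?thesis using assms i unfolding is_tree_def by auto
  next
    case False
    then have "i = length p - 1" using i by auto
    then have "x = last p" using i p unfolding is_path_def by (metis last_conv_nth)
    then show ?thesis using p uv unfolding is_path_def by auto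
  qed
qed

lemma tree_sym: "is_tree V E \<Longrightarrow> \<forall>a b. E a b \<longrightarrow> E b a"
  unfolding is_tree_def by auto

lemma tree_uniq: "is_tree V E \<Longrightarrow> u \<in> V \<Longrightarrow> v \<in> V \<Longrightarrow> is_path E u v p \<Longrightarrow> is_path E u v p' \<Longrightarrow> p = p'"
proof -
  assume "is_tree V E" "u \<in> V" "v \<in> V" "is_path E u v p" "is_path E u v p'"
  then have "\<exists>!p. is_path E u v p" unfolding is_tree_def by simp
  then show "p = p'" using \<open>is_path E u v p\<close> \<open>is_path E u v p'\<close> by blast
qed

lemma tree_ex: "is_tree V E \<Longrightarrow> u \<in> V \<Longrightarrow> v \<in> V \<Longrightarrow> \<exists>p. is_path E u v p"
  unfolding is_tree_def by (simp add: Ex1_def) blast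

lemma conv_comp:
  assumes T: "is_tree V E" and UV: "U \<subseteq> V" and cU: "conv E U" and C: "C \<in> comps E (U - {q})"
  shows "conv E C"
  unfolding conv_def
proof (intro ballI allI impI)
  fix u v p assume u: "u \<in> C" and v: "v \<in> C" and p: "is_path E u v p"
  have CU: "C \<subseteq> U - {q}" using comps_sub[OF C] .
  have sym: "\<forall>a b. E a b \<longrightarrow> E b a" using tree_sym[OF T] .
  have "(ind E (U - {q}))\<^sup>*\<^sup>* u v" using comps_eq[OF sym C u] v by auto
  then obtain p' where p': "is_path E u v p'" "set p' \<subseteq> U - {q}"
    using walk_path[of E "U - {q}" u v] u CU by auto
  have "p = p'" using tree_uniq[OF T _ _ p p'(1)] u v CU UV by auto
  then show "set p \<subseteq> C" using path_in_comp[OF sym p _ C u] p'(2) by auto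
qed

lemma sep:
  assumes T: "is_tree V E" and UV: "U \<subseteq> V" and cU: "conv E U"
    and C1: "C1 \<in> comps E (U - {q})" and C2: "C2 \<in> comps E (U - {q})" and ne: "C1 \<noteq> C2"
    and u: "u \<in> C1" and v: "v \<in> C2" and p: "is_path E u v p"
  shows "q \<in> set p"
proof (rule ccontr)
  assume nq: "q \<notin> set p"
  have sym: "\<forall>a b. E a b \<longrightarrow> E b a" using tree_sym[OF T] .
  have "u \<in> U" "v \<in> U" using u v comps_sub[OF C1] comps_sub[OF C2] by auto
  then have "set p \<subseteq> U" using cU p unfolding conv_def by simp
  then have "set p \<subseteq> U - {q}" using nq by auto
  then have "set p \<subseteq> C1" using path_in_comp[OF sym p _ C1 u] by auto
  moreover have "v \<in> set p" using p unfolding is_path_def by (metis last_in_set)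
  ultimately have "v \<in> C1" by auto
  then show False using comps_disj[OF sym C1 C2 _ v] ne by auto
qed

lemma foldr_max_le: "(\<forall>x\<in>set xs. x \<le> c) \<Longrightarrow> foldr max xs (0::nat) \<le> c"
  by (induction xs) auto

lemma foldr_max_ge: "x \<in> set xs \<Longrightarrow> x \<le> foldr max xs (0::nat)"
  by (induction xs) auto

lemma dverts_eq: "is_dtree E U D \<Longrightarrow> dverts D = U"
proof (induction rule: is_dtree.induct)
  case (1 q U Ds)
  have eq: "dverts ` set Ds = comps E (U - {q})" using 1 by blast
  have "(\<Union>D\<in>set Ds. dverts D) = \<Union>(comps E (U - {q}))" using eq by simp
  also have "\<dots> = U - {q}" by (rule comps_union)
  finally show ?case using 1 by auto
qed

lemma ext_mono: "ext_strategy U E w f \<Longrightarrow> C \<subseteq> U \<Longrightarrow> ext_strategy C E w f"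
  unfolding ext_strategy_def by (meson subsetD)

lemma part2:
  assumes T: "is_tree V E"
  shows "U \<subseteq> V \<Longrightarrow> conv E U \<Longrightarrow> U \<noteq> {} \<Longrightarrow> ext_strategy U E w f \<Longrightarrow>
    \<exists>D. is_dtree E U D \<and> dcost w D \<le> sup_union U f"
proof (induction "card U" arbitrary: U rule: less_induct)
  case less
  have finV: "finite V" using T unfolding is_tree_def by simp
  have finU: "finite U" using finite_subset[OF less.prems(1) finV] .
  let ?M = "Max ((\<lambda>v. snd (f v)) ` U)"
  have "?M \<in> (\<lambda>v. snd (f v)) ` U" using finU less.prems(3) by (intro Max_in) auto
  then obtain q where q: "q \<in> U" "snd (f q) = ?M" by auto
  have qmax: "\<forall>u\<in>U. snd (f u) \<le> snd (f q)" using q finU by auto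
  have supU: "sup_union U f = snd (f q)" unfolding sup_union_def using q by simp
  have ext: "\<forall>v\<in>U. fst (f v) < snd (f v) \<and> ilen (f v) \<ge> w v"
    using less.prems(4) unfolding ext_strategy_def by blast
  have below: "\<forall>u\<in>U - {q}. snd (f u) \<le> fst (f q)"
  proof (intro ballI, rule ccontr)
    fix u assume u: "u \<in> U - {q}" and nb: "\<not> snd (f u) \<le> fst (f q)"
    have "iinter (f u) (f q)" unfolding iinter_def using nb ext u q qmax by fastforce
    then obtain p v3 where p: "is_path E u q p" "v3 \<in> set p" "igt (f v3) (f q)"
      using less.prems(4) u q unfolding ext_strategy_def by blast
    have uU: "u \<in> U" using u by simp
    have "set p \<subseteq> U" using less.prems(2) p(1) uU q(1) unfolding conv_def by meson
    then have "v3 \<in> U" using p(2) by auto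
    then show False using p(3) qmax ext unfolding igt_def by fastforce
  qed
  let ?S = "U - {q}"
  let ?CS = "comps E ?S"
  have finCS: "finite ?CS"
  proof -
    have "?CS \<subseteq> Pow ?S" using comps_sub by blast
    then show ?thesis using finU by (meson finite_Diff finite_Pow_iff finite_subset)
  qed
  have "\<forall>C\<in>?CS. \<exists>D. is_dtree E C D \<and> dcost w D \<le> sup_union C f"
  proof
    fix C assume C: "C \<in> ?CS"
    have CS: "C \<subseteq> ?S" using comps_sub[OF C] .
    have "C \<subset> U" using CS q by auto
    then have cardC: "card C < card U" using finU by (rule psubset_card_mono[rotated])
    show "\<exists>D. is_dtree E C D \<and> dcost w D \<le> sup_union C f"
      using less.hyps[OF cardC] CS less.prems conv_comp[OF T less.prems(1,2) C] comps_ne[OF C]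
        ext_mono[OF less.prems(4), of C] by auto
  qed
  then obtain g where g: "\<forall>C\<in>?CS. is_dtree E C (g C) \<and> dcost w (g C) \<le> sup_union C f"
    by metis
  obtain cs where cs: "set cs = ?CS" "distinct cs" using finite_distinct_list[OF finCS] by blast
  define Ds where "Ds = map g cs"
  have dv: "\<forall>C\<in>?CS. dverts (g C) = C" using g dverts_eq by blast
  have mdv: "map dverts Ds = cs" unfolding Ds_def map_map using dv cs(1) by (intro map_idI) auto
  have isd: "is_dtree E U (DNode q Ds)"
  proof (rule is_dtree.intros)
    show "q \<in> U" by fact
    show "\<forall>D\<in>set Ds. is_dtree E (dverts D) D" unfolding Ds_def using g dv cs(1) by auto
    show "distinct (map dverts Ds)" using mdv cs(2) by simp
    show "dverts ` set Ds = ?CS" using mdv cs(1) by (metis set_map)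
  qed
  have "\<forall>x\<in>set (map (dcost w) Ds). x \<le> fst (f q)"
  proof
    fix x assume "x \<in> set (map (dcost w) Ds)"
    then obtain C where C: "C \<in> ?CS" "x = dcost w (g C)" unfolding Ds_def using cs(1) by auto
    have CS: "C \<subseteq> ?S" using comps_sub[OF C(1)] .
    have "sup_union C f \<le> fst (f q)" unfolding sup_union_def
      using comps_ne[OF C(1)] CS below finite_subset[OF _ finU, of C]
      by (subst Max_le_iff) auto
    then show "x \<le> fst (f q)" using g C by fastforce
  qed
  then have "foldr max (map (dcost w) Ds) 0 \<le> fst (f q)" by (rule foldr_max_le)
  moreover have "w q \<le> snd (f q) - fst (f q)" using ext q unfolding ilen_def by auto
  moreover have "fst (f q) < snd (f q)" using ext q by blast
  ultimately have "dcost w (DNode q Ds) \<le> snd (f q)" by simp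
  then have "dcost w (DNode q Ds) \<le> sup_union U f" using supU by simp
  then show ?case using isd by blast
qed

fun mkf :: "('a \<Rightarrow> nat) \<Rightarrow> 'a dtree \<Rightarrow> 'a \<Rightarrow> nat \<times> nat"
  and mkfs :: "('a \<Rightarrow> nat) \<Rightarrow> 'a dtree list \<Rightarrow> 'a \<Rightarrow> nat \<times> nat" where
  "mkf w (DNode q Ds) v = (if v = q then (dcost w (DNode q Ds) - w q, dcost w (DNode q Ds)) else mkfs w Ds v)"
| "mkfs w [] v = (0,0)"
| "mkfs w (D#Ds) v = (if v \<in> dverts D then mkf w D v else mkfs w Ds v)"

lemma mkfs_eq: "D \<in> set Ds \<Longrightarrow> v \<in> dverts D \<Longrightarrow>
  (\<forall>D1\<in>set Ds. \<forall>D2\<in>set Ds. v \<in> dverts D1 \<longrightarrow> v \<in> dverts D2 \<longrightarrow> D1 = D2) \<Longrightarrow> mkfs w Ds v = mkf w D v"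
  by (induction Ds) auto

lemma no_inter1: "snd B \<le> fst A \<Longrightarrow> \<not> iinter A B"
  unfolding iinter_def by auto

lemma no_inter2: "snd A \<le> fst B \<Longrightarrow> \<not> iinter A B"
  unfolding iinter_def by auto

lemma part1:
  assumes T: "is_tree V E" and pos: "\<forall>v\<in>V. w v > 0"
  shows "is_dtree E U D \<Longrightarrow> U \<subseteq> V \<Longrightarrow> conv E U \<Longrightarrow>
    ext_strategy U E w (mkf w D) \<and> (\<forall>v\<in>U. snd (mkf w D v) \<le> dcost w D) \<and> (\<exists>v\<in>U. snd (mkf w D v) = dcost w D)"
proof (induction rule: is_dtree.induct)
  case (1 q U Ds)
  have sym: "\<forall>a b. E a b \<longrightarrow> E b a" using tree_sym[OF T] .
  let ?c = "dcost w (DNode q Ds)"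
  let ?m = "foldr max (map (dcost w) Ds) 0"
  let ?F = "mkf w (DNode q Ds)"
  have c: "?c = w q + ?m" by simp
  have UV: "U \<subseteq> V" and cU: "conv E U" using 1 by blast+
  have eq: "dverts ` set Ds = comps E (U - {q})" using 1 by blast
  have dis: "distinct (map dverts Ds)" using 1 by blast
  have inC: "\<And>D. D \<in> set Ds \<Longrightarrow> dverts D \<in> comps E (U - {q})" using eq by blast
  have IH: "\<And>D. D \<in> set Ds \<Longrightarrow> ext_strategy (dverts D) E w (mkf w D) \<and> (\<forall>v\<in>dverts D. snd (mkf w D v) \<le> dcost w D)"
  proof -
    fix D assume D: "D \<in> set Ds"
    have sub: "dverts D \<subseteq> U - {q}" using comps_sub[OF inC[OF D]] .
    have cv: "conv E (dverts D)" using conv_comp[OF T UV cU inC[OF D]] .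
    have "is_dtree E (dverts D) D \<and> (dverts D \<subseteq> V \<longrightarrow> conv E (dverts D) \<longrightarrow>
      ext_strategy (dverts D) E w (mkf w D) \<and> (\<forall>v\<in>dverts D. snd (mkf w D v) \<le> dcost w D) \<and> (\<exists>v\<in>dverts D. snd (mkf w D v) = dcost w D))"
      using "1.IH" D by blast
    then show "ext_strategy (dverts D) E w (mkf w D) \<and> (\<forall>v\<in>dverts D. snd (mkf w D v) \<le> dcost w D)"
      using sub cv UV by blast
  qed
  have inj: "inj_on dverts (set Ds)" using dis by (simp add: distinct_map)
  have uniq: "\<forall>D1\<in>set Ds. \<forall>D2\<in>set Ds. v \<in> dverts D1 \<longrightarrow> v \<in> dverts D2 \<longrightarrow> D1 = D2" for v
  proof (intro ballI impI)
    fix D1 D2 assume a: "D1 \<in> set Ds" "D2 \<in> set Ds" "v \<in> dverts D1" "v \<in> dverts D2"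
    have "dverts D1 = dverts D2" using comps_disj[OF sym inC[OF a(1)] inC[OF a(2)] a(3,4)] .
    then show "D1 = D2" using inj a(1,2) by (meson inj_onD)
  qed
  have nq: "\<And>D v. D \<in> set Ds \<Longrightarrow> v \<in> dverts D \<Longrightarrow> v \<noteq> q \<and> v \<in> U"
    using comps_sub inC by blast
  have mk: "\<And>D v. D \<in> set Ds \<Longrightarrow> v \<in> dverts D \<Longrightarrow> ?F v = mkf w D v"
  proof -
    fix D v assume a: "D \<in> set Ds" "v \<in> dverts D"
    have "v \<noteq> q" using nq[OF a] by blast
    then have "?F v = mkfs w Ds v" by simp
    also have "\<dots> = mkf w D v" using mkfs_eq[OF a uniq[of v]] .
    finally show "?F v = mkf w D v" .
  qed
  have cover: "\<And>v. v \<in> U - {q} \<Longrightarrow> \<exists>D\<in>set Ds. v \<in> dverts D"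
  proof -
    fix v assume v: "v \<in> U - {q}"
    have cu: "\<Union>(comps E (U - {q})) = U - {q}" by (rule comps_union)
    have "v \<in> \<Union>(dverts ` set Ds)" unfolding eq cu using v .
    then show "\<exists>D\<in>set Ds. v \<in> dverts D" by (simp only: UN_iff)
  qed
  have mq: "?F q = (?c - w q, ?c)" by simp
  have wq: "w q > 0" using pos 1(1) UV by blast
  have bound: "\<And>v. v \<in> U - {q} \<Longrightarrow> snd (?F v) \<le> ?m"
  proof -
    fix v assume v: "v \<in> U - {q}"
    then obtain D where D: "D \<in> set Ds" "v \<in> dverts D" using cover by blast
    have "snd (?F v) \<le> dcost w D" using IH[OF D(1)] D mk by simp
    also have "\<dots> \<le> ?m" using D(1) by (intro foldr_max_ge) simp
    finally show "snd (?F v) \<le> ?m" .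
  qed
  have E1: "\<forall>v\<in>U. fst (?F v) < snd (?F v) \<and> ilen (?F v) \<ge> w v"
  proof
    fix v assume v: "v \<in> U"
    show "fst (?F v) < snd (?F v) \<and> ilen (?F v) \<ge> w v"
    proof (cases "v = q")
      case True then show ?thesis using mq wq c unfolding ilen_def by simp
    next
      case False
      then obtain D where D: "D \<in> set Ds" "v \<in> dverts D" using cover v by blast
      then show ?thesis using IH[OF D(1)] mk[OF D] unfolding ext_strategy_def by simp
    qed
  qed
  have E2: "\<forall>v1\<in>U. \<forall>v2\<in>U. v1 \<noteq> v2 \<and> iinter (?F v1) (?F v2) \<longrightarrow>
        (\<exists>p. is_path E v1 v2 p \<and> (\<exists>v3\<in>set p. igt (?F v3) (?F v1) \<and> igt (?F v3) (?F v2)))"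
  proof (intro ballI impI)
    fix v1 v2 assume v: "v1 \<in> U" "v2 \<in> U" and a: "v1 \<noteq> v2 \<and> iinter (?F v1) (?F v2)"
    have fq: "fst (?F q) = ?m" by (simp only: mq fst_conv) (simp add: c)
    have nq1: "v1 \<noteq> q"
    proof
      assume e: "v1 = q"
      then have "v2 \<in> U - {q}" using v a by auto
      then have "snd (?F v2) \<le> fst (?F v1)" using bound fq e by metis
      then show False using a no_inter1 by blast
    qed
    have nq2: "v2 \<noteq> q"
    proof
      assume e: "v2 = q"
      then have "v1 \<in> U - {q}" using v a by auto
      then have "snd (?F v1) \<le> fst (?F v2)" using bound fq e by metis
      then show False using a no_inter2 by blast
    qed
    obtain D1 where D1: "D1 \<in> set Ds" "v1 \<in> dverts D1" using cover v nq1 by blast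
    obtain D2 where D2: "D2 \<in> set Ds" "v2 \<in> dverts D2" using cover v nq2 by blast
    show "\<exists>p. is_path E v1 v2 p \<and> (\<exists>v3\<in>set p. igt (?F v3) (?F v1) \<and> igt (?F v3) (?F v2))"
    proof (cases "D1 = D2")
      case True
      have "iinter (mkf w D1 v1) (mkf w D1 v2)" using a mk D1 D2 True by simp
      moreover have ex: "ext_strategy (dverts D1) E w (mkf w D1)" using IH[OF D1(1)] by simp
      then have H: "\<forall>v1\<in>dverts D1. \<forall>v2\<in>dverts D1. v1 \<noteq> v2 \<and> iinter (mkf w D1 v1) (mkf w D1 v2) \<longrightarrow>
        (\<exists>p. is_path E v1 v2 p \<and> (\<exists>v3\<in>set p. igt (mkf w D1 v3) (mkf w D1 v1) \<and> igt (mkf w D1 v3) (mkf w D1 v2)))"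
        unfolding ext_strategy_def by (rule conjunct2)
      have v2D: "v2 \<in> dverts D1" using D2 True by simp
      have "\<exists>p. is_path E v1 v2 p \<and> (\<exists>v3\<in>set p. igt (mkf w D1 v3) (mkf w D1 v1) \<and> igt (mkf w D1 v3) (mkf w D1 v2))"
        using H[rule_format, OF D1(2) v2D] a calculation by simp
      then obtain p v3 where p: "is_path E v1 v2 p" "v3 \<in> set p"
        "igt (mkf w D1 v3) (mkf w D1 v1)" "igt (mkf w D1 v3) (mkf w D1 v2)"
        by blast
      have cv: "conv E (dverts D1)" using conv_comp[OF T UV cU inC[OF D1(1)]] .
      have "set p \<subseteq> dverts D1" using cv p(1) D1(2) v2D unfolding conv_def by simp
      then have "v3 \<in> dverts D1" using p(2) by auto
      then have e3: "?F v3 = mkf w D1 v3" using mk D1 by blast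
      have e1: "?F v1 = mkf w D1 v1" using mk D1 by blast
      have e2: "?F v2 = mkf w D1 v2" using mk D1(1) v2D by blast
      have "igt (?F v3) (?F v1) \<and> igt (?F v3) (?F v2)" using p(3,4) unfolding e1 e2 e3 by blast
      then show ?thesis using p(1,2) by blast
    next
      case False
      have ne: "dverts D1 \<noteq> dverts D2" using False inj D1 D2 by (meson inj_onD)
      have vV: "v1 \<in> V" "v2 \<in> V" using v UV by auto
      obtain p where p: "is_path E v1 v2 p" using tree_ex[OF T vV] by blast
      have "q \<in> set p" using sep[OF T UV cU inC[OF D1(1)] inC[OF D2(1)] ne D1(2) D2(2) p] .
      moreover have "igt (?F q) (?F v1)" "igt (?F q) (?F v2)"
        unfolding igt_def using bound[of v1] bound[of v2] v nq1 nq2 fq by (metis DiffI singletonD)+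
      ultimately show ?thesis using p by blast
    qed
  qed
  have ext: "ext_strategy U E w ?F" unfolding ext_strategy_def using E1 E2 by (intro conjI)
  have mm: "?m \<le> ?c" using c by linarith
  have le: "\<forall>v\<in>U. snd (?F v) \<le> ?c"
  proof
    fix v assume v: "v \<in> U"
    show "snd (?F v) \<le> ?c"
    proof (cases "v = q")
      case True then show ?thesis using mq by (simp only: snd_conv order_refl)
    next
      case False then show ?thesis using bound[of v] v mm by (meson DiffI singletonD order_trans)
    qed
  qed
  have ex: "\<exists>v\<in>U. snd (?F v) = ?c" using mq 1(1) by (metis snd_conv)
  show ?case using ext le ex by (intro conjI)
qed

lemma dtree_ex: "finite U \<Longrightarrow> U \<noteq> {} \<Longrightarrow> \<exists>D. is_dtree E U D"
proof (induction "card U" arbitrary: U rule: less_induct)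
  case less
  obtain q where q: "q \<in> U" using less.prems(2) by blast
  let ?S = "U - {q}"
  let ?CS = "comps E ?S"
  have finCS: "finite ?CS"
  proof -
    have "?CS \<subseteq> Pow ?S" using comps_sub by blast
    then show ?thesis using less.prems(1) by (meson finite_Diff finite_Pow_iff finite_subset)
  qed
  have "\<forall>C\<in>?CS. \<exists>D. is_dtree E C D"
  proof
    fix C assume C: "C \<in> ?CS"
    have CS: "C \<subseteq> ?S" using comps_sub[OF C] .
    have "C \<subset> U" using CS q by auto
    then have cardC: "card C < card U" using less.prems(1) by (rule psubset_card_mono[rotated])
    have "finite C" using CS less.prems(1) finite_subset by blast
    then show "\<exists>D. is_dtree E C D" using less.hyps[OF cardC] comps_ne[OF C] by blast
  qed
  then obtain g where g: "\<forall>C\<in>?CS. is_dtree E C (g C)" by metis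
  obtain cs where cs: "set cs = ?CS" "distinct cs" using finite_distinct_list[OF finCS] by blast
  define Ds where "Ds = map g cs"
  have dv: "\<forall>C\<in>?CS. dverts (g C) = C" using g dverts_eq by blast
  have mdv: "map dverts Ds = cs" unfolding Ds_def map_map using dv cs(1) by (intro map_idI) auto
  have "is_dtree E U (DNode q Ds)"
  proof (rule is_dtree.intros)
    show "q \<in> U" by fact
    show "\<forall>D\<in>set Ds. is_dtree E (dverts D) D" unfolding Ds_def using g dv cs(1) by auto
    show "distinct (map dverts Ds)" using mdv cs(2) by simp
    show "dverts ` set Ds = ?CS" using mdv cs(1) by (metis set_map)
  qed
  then show ?case by blast
qed

theorem mainTheorem10:
  fixes V :: "'a set" and E :: "'a \<Rightarrow> 'a \<Rightarrow> bool" and w :: "'a \<Rightarrow> nat"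
  assumes "is_tree V E"
    and "\<forall>v\<in>V. w v > 0"
  shows "(\<forall>D. is_dtree E V D \<longrightarrow> (\<exists>f. ext_strategy V E w f \<and> sup_union V f = dcost w D))
       \<and> (\<forall>f. ext_strategy V E w f \<longrightarrow> (\<exists>D. is_dtree E V D \<and> dcost w D \<le> sup_union V f))
       \<and> (\<exists>f. ext_strategy V E w f \<and> sup_union V f = OPT V E w)
       \<and> (\<forall>f. ext_strategy V E w f \<longrightarrow> OPT V E w \<le> sup_union V f)"
proof -
  have T: "is_tree V E" by fact
  have finV: "finite V" and neV: "V \<noteq> {}" using T unfolding is_tree_def by auto
  have cV: "conv E V" using conv_V[OF T] .
  have A: "\<forall>D. is_dtree E V D \<longrightarrow> (\<exists>f. ext_strategy V E w f \<and> sup_union V f = dcost w D)"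
  proof (intro allI impI)
    fix D assume D: "is_dtree E V D"
    have P: "ext_strategy V E w (mkf w D) \<and> (\<forall>v\<in>V. snd (mkf w D v) \<le> dcost w D) \<and> (\<exists>v\<in>V. snd (mkf w D v) = dcost w D)"
      using part1[OF T assms(2) D _ cV] by simp
    have "sup_union V (mkf w D) = dcost w D" unfolding sup_union_def
      using P finV by (intro Max_eqI) (auto simp: image_iff, metis)
    then show "\<exists>f. ext_strategy V E w f \<and> sup_union V f = dcost w D" using P by blast
  qed
  have B: "\<forall>f. ext_strategy V E w f \<longrightarrow> (\<exists>D. is_dtree E V D \<and> dcost w D \<le> sup_union V f)"
    using part2[OF T _ cV neV] by blast
  obtain D0 where D0: "is_dtree E V D0" using dtree_ex[OF finV neV] by blast
  have ex: "\<exists>c. \<exists>D. is_dtree E V D \<and> dcost w D = c" using D0 by blast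
  have "\<exists>D. is_dtree E V D \<and> dcost w D = OPT V E w"
    unfolding OPT_def using LeastI_ex[OF ex] .
  then have C: "\<exists>f. ext_strategy V E w f \<and> sup_union V f = OPT V E w" using A by metis
  have Dd: "\<forall>f. ext_strategy V E w f \<longrightarrow> OPT V E w \<le> sup_union V f"
  proof (intro allI impI)
    fix f assume "ext_strategy V E w f"
    then obtain D where D: "is_dtree E V D" "dcost w D \<le> sup_union V f" using B by blast
    have "OPT V E w \<le> dcost w D" unfolding OPT_def using D(1) by (intro Least_le) blast
    then show "OPT V E w \<le> sup_union V f" using D(2) by simp
  qed
  show ?thesis using A B C Dd by blast
qed

end
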